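(* Let $k\ge n\ge1$ and let $\bar K$ be the transition matrix of the Burnside process on $\Pi_n$ (defined in the context). Let $x,y\in\Pi_n$ have $j_x$ and $j_y$ blocks respectively, and suppose $j_x\le j_y$. Then $$\bar K(x,y)=\sum_{j=j_y}^{\min(j_x+j_y,\,k)}\frac{j_x!\,j_y!}{(j-j_x)!\,(j-j_y)!\,(j_x+j_y-j)!}\,E\left[\frac{1}{(Y_j+j)^n}\right],$$ where $Y_j$ denotes the number of fixed points of a uniformly random permutation in $S_{k-j}$ (with $Y_k=0$). If $j_x>j_y$, then $\bar K(x,y)=\bar K(y,x)$.
   Context: $S_k$ acts on $[k]^n$ by $\sigma(u_1,\dots,u_n)=(\sigma(u_1),\dots,\sigma(u_n))$. The Burnside process on $[k]^n$ is the Markov chain which, from $u$, chooses $\sigma$ uniformly among permutations of $[k]$ fixing every value appearing in $u$, then produces $v\in[k]^n$ by choosing each coordinate independently and uniformly among the fixed points of $\sigma$; its transition matrix is $K(u,v)=\sum_{\sigma\in G_u\cap G_v}\frac{1}{|G_u|\,\mathrm{fp}(\sigma)^n}$ with $G_u$ the stabilizer of $u$ and $\mathrm{fp}(\sigma)$ the number of fixed points. $\Pi_n$ is the set of set partitions of $[n]$; to $u\in[k]^n$ corresponds the set partition in which $i,j$ lie in the same block iff $u_i=u_j$, and the orbits of the action are exactly the classes of vectors with the same set partition. The Burnside process on $\Pi_n$ is the lumped chain: $\bar K(x,y)=\sum_{v\text{ with partition }y}K(u,v)$ for any $u$ with partition $x$. *)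

theory Defs
  imports Complex_Main "HOL-Library.FuncSet" "HOL-Library.Disjoint_Sets" "HOL-Combinatorics.Permutations"
begin

text \<open>[k] is modelled as {0..<k}, coordinates [n] as {0..<n}.
  Vectors in [k]^n are extensional functions {0..<n} -> {0..<k}.\<close>

definition words :: "nat \<Rightarrow> nat \<Rightarrow> (nat \<Rightarrow> nat) set" where
  "words k n = {0..<n} \<rightarrow>\<^sub>E {0..<k}"

definition fp :: "nat \<Rightarrow> (nat \<Rightarrow> nat) \<Rightarrow> nat" where
  "fp k \<sigma> = card {a \<in> {0..<k}. \<sigma> a = a}"

definition stab :: "nat \<Rightarrow> nat \<Rightarrow> (nat \<Rightarrow> nat) \<Rightarrow> (nat \<Rightarrow> nat) set" where
  "stab k n u = {\<sigma>. \<sigma> permutes {0..<k} \<and> (\<forall>i\<in>{0..<n}. \<sigma> (u i) = u i)}"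

definition Kb :: "nat \<Rightarrow> nat \<Rightarrow> (nat \<Rightarrow> nat) \<Rightarrow> (nat \<Rightarrow> nat) \<Rightarrow> real" where
  "Kb k n u v = (\<Sum>\<sigma>\<in>stab k n u \<inter> stab k n v.
      1 / (real (card (stab k n u)) * real (fp k \<sigma>) ^ n))"

definition setpart :: "nat \<Rightarrow> (nat \<Rightarrow> nat) \<Rightarrow> nat set set" where
  "setpart n u = {{i \<in> {0..<n}. u i = u j} | j. j \<in> {0..<n}}"

definition setparts :: "nat \<Rightarrow> nat set set set" where
  "setparts n = {P. partition_on {0..<n} P}"

definition Kbar :: "nat \<Rightarrow> nat \<Rightarrow> nat set set \<Rightarrow> nat set set \<Rightarrow> real" where
  "Kbar k n x y = (let u = (SOME u. u \<in> words k n \<and> setpart n u = x) in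
      \<Sum>v\<in>{v \<in> words k n. setpart n v = y}. Kb k n u v)"

text \<open>E[1/(Y_j + j)^n], Y_j the number of fixed points of a uniform random
  permutation of S_(k-j).\<close>
definition EY :: "nat \<Rightarrow> nat \<Rightarrow> nat \<Rightarrow> real" where
  "EY k n j = (\<Sum>\<tau>\<in>{\<tau>. \<tau> permutes {0..<k-j}}. 1 / (real (fp (k-j) \<tau>) + real j) ^ n)
      / real (card {\<tau>. \<tau> permutes {0..<k-j}})"

end

theory Submission
  imports Defs "HOL-Combinatorics.Multiset_Permutations"
begin


lemma setpart_image: "setpart n v = (\<lambda>j. {i \<in> {0..<n}. v i = v j}) ` {0..<n}"
  unfolding setpart_def by auto

lemma setpart_eq_iff:
  "setpart n v = setpart n w \<longleftrightarrow> (\<forall>i<n. \<forall>j<n. v i = v j \<longleftrightarrow> w i = w j)"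
proof
  assume H: "setpart n v = setpart n w"
  have *: "w i = w j" if "setpart n v = setpart n w" "i<n" "j<n" "v i = v j" for v w :: "nat \<Rightarrow> nat" and i j
  proof -
    have "{l \<in> {0..<n}. v l = v i} \<in> setpart n w" using that unfolding setpart_def by auto
    then obtain m where m: "m < n" "{l \<in> {0..<n}. v l = v i} = {l \<in> {0..<n}. w l = w m}"
      unfolding setpart_def by auto
    have "i \<in> {l \<in> {0..<n}. v l = v i}" "j \<in> {l \<in> {0..<n}. v l = v i}"
      using that by auto
    then have "i \<in> {l \<in> {0..<n}. w l = w m}" "j \<in> {l \<in> {0..<n}. w l = w m}"
      unfolding m(2) by auto
    then show ?thesis by simp
  qed
  show "\<forall>i<n. \<forall>j<n. v i = v j \<longleftrightarrow> w i = w j"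
    using *[OF H] *[OF H[symmetric]] by blast
next
  assume "\<forall>i<n. \<forall>j<n. v i = v j \<longleftrightarrow> w i = w j"
  then have "\<And>j. j \<in> {0..<n} \<Longrightarrow> {i \<in> {0..<n}. v i = v j} = {i \<in> {0..<n}. w i = w j}" by auto
  then show "setpart n v = setpart n w" unfolding setpart_image by (rule image_cong[OF refl])
qed

lemma part_class:
  assumes P: "partition_on {0..<n} P"
  shows "\<exists>c. c ` {0..<n} = {0..<card P} \<and> setpart n c = P"
proof -
  have finP: "finite P" using P unfolding partition_on_def
    by (metis finite_UnionD finite_atLeastLessThan)
  obtain e where e: "bij_betw e {0..<card P} P" using ex_bij_betw_nat_finite[OF finP] by blast
  define blk where "blk i = (THE B. B \<in> P \<and> i \<in> B)" for i
  have ex1: "\<exists>!B. B \<in> P \<and> i \<in> B" if "i < n" for i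
  proof -
    have "i \<in> \<Union>P" using P that unfolding partition_on_def by auto
    then obtain B where "B \<in> P" "i \<in> B" by blast
    moreover have "B' = B" if "B' \<in> P" "i \<in> B'" "B \<in> P" "i \<in> B" for B'
      using P that unfolding partition_on_def disjoint_def by blast
    ultimately show ?thesis by blast
  qed
  have blk: "blk i \<in> P \<and> i \<in> blk i" if "i < n" for i
    unfolding blk_def using theI'[OF ex1[OF that]] .
  have blk_eq: "blk j = B" if "j < n" "B \<in> P" "j \<in> B" for j B
    using ex1[OF that(1)] blk[OF that(1)] that by blast
  have sub: "B \<subseteq> {0..<n}" if "B \<in> P" for B using P that unfolding partition_on_def by auto
  define c where "c i = inv_into {0..<card P} e (blk i)" for i
  have inv: "bij_betw (inv_into {0..<card P} e) P {0..<card P}" using e by (rule bij_betw_inv_into)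
  have ceq: "c i = c j \<longleftrightarrow> blk i = blk j" if "i<n" "j<n" for i j
    unfolding c_def using inv blk[OF that(1)] blk[OF that(2)]
    by (metis bij_betw_inv_into_left e)
  have blkimg: "blk ` {0..<n} = P"
  proof
    show "blk ` {0..<n} \<subseteq> P" using blk by auto
    show "P \<subseteq> blk ` {0..<n}"
    proof
      fix B assume "B \<in> P"
      then have "B \<noteq> {}" using P unfolding partition_on_def by auto
      then obtain j where "j \<in> B" by blast
      then show "B \<in> blk ` {0..<n}" using blk_eq sub \<open>B \<in> P\<close> by force
    qed
  qed
  have "c ` {0..<n} = {0..<card P}"
    using inv blkimg unfolding c_def bij_betw_def by (metis image_image)
  moreover have "setpart n c = P"
  proof -
    have bj: "{i \<in> {0..<n}. c i = c j} = blk j" if "j < n" for j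
    proof -
      have "i \<in> blk j" if "i<n" "c i = c j" for i using ceq blk that \<open>j<n\<close> by metis
      moreover have "i < n \<and> c i = c j" if "i \<in> blk j" for i
        using sub blk \<open>j<n\<close> that ceq blk_eq by (metis atLeastLessThan_iff subsetD)
      ultimately show ?thesis by auto
    qed
    have "setpart n c = blk ` {0..<n}" unfolding setpart_image
      by (rule image_cong[OF refl]) (use bj in auto)
    then show ?thesis using blkimg by simp
  qed
  ultimately show ?thesis by blast
qed




lemma conj_perm:
  assumes fin: "finite E"
    and gD: "\<forall>x\<in>D. g x \<in> E" and hE: "\<forall>y\<in>E. h y \<in> D"
    and hg: "\<forall>x\<in>D. h (g x) = x" and gh: "\<forall>y\<in>E. g (h y) = y"
    and \<sigma>: "\<sigma> permutes D"
  shows "(\<lambda>z. if z \<in> E then g (\<sigma> (h z)) else z) permutes E"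
    and "card {z\<in>E. (if z \<in> E then g (\<sigma> (h z)) else z) = z} = card {z\<in>D. \<sigma> z = z}"
    and "(\<lambda>z. if z \<in> D then h ((\<lambda>z. if z \<in> E then g (\<sigma> (h z)) else z) (g z)) else z) = \<sigma>"
proof -
  define \<Phi> where "\<Phi> = (\<lambda>z. if z \<in> E then g (\<sigma> (h z)) else z)"
  have sD: "\<sigma> x \<in> D" if "x \<in> D" for x using \<sigma> that by (simp add: permutes_in_image)
  have inj: "inj_on \<Phi> E"
  proof (rule inj_onI)
    fix z z' assume z: "z \<in> E" "z' \<in> E" "\<Phi> z = \<Phi> z'"
    then have "g (\<sigma> (h z)) = g (\<sigma> (h z'))" unfolding \<Phi>_def by simp
    then have "h (g (\<sigma> (h z))) = h (g (\<sigma> (h z')))" by simp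
    then have "\<sigma> (h z) = \<sigma> (h z')" using hg sD hE z by simp
    then have "h z = h z'" using permutes_inj[OF \<sigma>] by (simp add: inj_eq)
    then have "g (h z) = g (h z')" by simp
    then show "z = z'" using gh z by simp
  qed
  have img: "\<Phi> ` E \<subseteq> E" unfolding \<Phi>_def using gD hE sD by auto
  have "\<Phi> ` E = E" using endo_inj_surj[OF fin img inj] .
  then have "bij_betw \<Phi> E E" using inj by (simp add: bij_betw_def)
  moreover have "\<Phi> x = x" if "x \<notin> E" for x using that unfolding \<Phi>_def by simp
  ultimately show "\<Phi> permutes E" by (rule bij_imp_permutes)
  have "{z\<in>E. \<Phi> z = z} = g ` {z\<in>D. \<sigma> z = z}"
  proof
    show "{z\<in>E. \<Phi> z = z} \<subseteq> g ` {z\<in>D. \<sigma> z = z}"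
    proof
      fix z assume z: "z \<in> {z\<in>E. \<Phi> z = z}"
      then have "g (\<sigma> (h z)) = z" unfolding \<Phi>_def by (simp split: if_splits)
      then have "h (g (\<sigma> (h z))) = h z" by simp
      then have "\<sigma> (h z) = h z" using hg sD hE z by simp
      moreover have "z = g (h z)" using gh z by simp
      ultimately show "z \<in> g ` {z\<in>D. \<sigma> z = z}" using hE z by blast
    qed
    show "g ` {z\<in>D. \<sigma> z = z} \<subseteq> {z\<in>E. \<Phi> z = z}"
      unfolding \<Phi>_def using gD hg by auto
  qed
  moreover have "inj_on g D" using hg by (metis inj_onI)
  then have "inj_on g {z\<in>D. \<sigma> z = z}" by (rule inj_on_subset) auto
  ultimately show "card {z\<in>E. \<Phi> z = z} = card {z\<in>D. \<sigma> z = z}"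
    by (simp add: card_image)
  show "(\<lambda>z. if z \<in> D then h (\<Phi> (g z)) else z) = \<sigma>"
  proof
    fix z show "(if z \<in> D then h (\<Phi> (g z)) else z) = \<sigma> z"
      using gD hg sD permutes_not_in[OF \<sigma>] unfolding \<Phi>_def by auto
  qed
qed

lemma sum_perm_bij:
  assumes "finite D" "finite E" "bij_betw g D E"
  shows "(\<Sum>\<sigma>\<in>{\<sigma>. \<sigma> permutes D}. f (card {z\<in>D. \<sigma> z = z}))
       = (\<Sum>\<tau>\<in>{\<tau>. \<tau> permutes E}. f (card {z\<in>E. \<tau> z = z}))"
proof -
  define h where "h = inv_into D g"
  have gD: "\<forall>x\<in>D. g x \<in> E" and hE: "\<forall>y\<in>E. h y \<in> D"
    and hg: "\<forall>x\<in>D. h (g x) = x" and gh: "\<forall>y\<in>E. g (h y) = y"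
    using assms(3) unfolding h_def
    by (auto simp: bij_betw_def inv_into_into inv_into_f_f f_inv_into_f)
  show ?thesis
  proof (rule sum.reindex_bij_witness[where j = "\<lambda>\<sigma>. (\<lambda>z. if z \<in> E then g (\<sigma> (h z)) else z)"
        and i = "\<lambda>\<tau>. (\<lambda>z. if z \<in> D then h (\<tau> (g z)) else z)"])
    fix \<sigma> assume "\<sigma> \<in> {\<sigma>. \<sigma> permutes D}"
    then have s: "\<sigma> permutes D" by simp
    note c = conj_perm[OF assms(2) gD hE hg gh s]
    show "(\<lambda>z. if z \<in> D then h ((\<lambda>z. if z \<in> E then g (\<sigma> (h z)) else z) (g z)) else z) = \<sigma>"
      by (rule c(3))
    show "(\<lambda>z. if z \<in> E then g (\<sigma> (h z)) else z) \<in> {\<tau>. \<tau> permutes E}" using c(1) by simp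
    show "f (card {z \<in> E. (if z \<in> E then g (\<sigma> (h z)) else z) = z}) = f (card {z \<in> D. \<sigma> z = z})"
      using c(2) by simp
  next
    fix \<tau> assume "\<tau> \<in> {\<tau>. \<tau> permutes E}"
    then have t: "\<tau> permutes E" by simp
    note c = conj_perm[OF assms(1) hE gD gh hg t]
    show "(\<lambda>z. if z \<in> E then g ((\<lambda>z. if z \<in> D then h (\<tau> (g z)) else z) (h z)) else z) = \<tau>"
      by (rule c(3))
    show "(\<lambda>z. if z \<in> D then h (\<tau> (g z)) else z) \<in> {\<sigma>. \<sigma> permutes D}" using c(1) by simp
  qed
qed

lemma fix_perm_sum:
  assumes S: "S \<subseteq> {0..<k}"
  shows "(\<Sum>\<sigma>\<in>{\<sigma>. \<sigma> permutes {0..<k} \<and> (\<forall>s\<in>S. \<sigma> s = s)}. f (fp k \<sigma>))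
       = (\<Sum>\<tau>\<in>{\<tau>. \<tau> permutes {0..<k - card S}}. f (card S + fp (k - card S) \<tau>))"
proof -
  define D where "D = {0..<k} - S"
  have setq: "{\<sigma>. \<sigma> permutes {0..<k} \<and> (\<forall>s\<in>S. \<sigma> s = s)} = {\<sigma>. \<sigma> permutes D}"
  proof (intro Collect_cong iffI)
    fix \<sigma> assume "\<sigma> permutes {0..<k} \<and> (\<forall>s\<in>S. \<sigma> s = s)"
    then have p: "\<sigma> permutes {0..<k}" and fx: "\<forall>s\<in>S. \<sigma> s = s" by auto
    have "\<And>x. x \<in> {0..<k} - D \<Longrightarrow> \<sigma> x = x" using fx unfolding D_def by blast
    then show "\<sigma> permutes D" by (rule permutes_superset[OF p])
  next
    fix \<sigma> assume s: "\<sigma> permutes D"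
    then show "\<sigma> permutes {0..<k} \<and> (\<forall>s\<in>S. \<sigma> s = s)"
      using permutes_not_in[OF s] unfolding D_def by (auto intro: permutes_subset)
  qed
  have fpD: "fp k \<sigma> = card S + card {z\<in>D. \<sigma> z = z}" if s: "\<sigma> permutes D" for \<sigma>
  proof -
    have e: "{a \<in> {0..<k}. \<sigma> a = a} = S \<union> {z\<in>D. \<sigma> z = z}"
      using S permutes_not_in[OF s] unfolding D_def by auto
    have "finite S" using S finite_subset by blast
    have "card (S \<union> {z\<in>D. \<sigma> z = z}) = card S + card {z\<in>D. \<sigma> z = z}"
      by (rule card_Un_disjoint) (auto simp: D_def \<open>finite S\<close>)
    then show ?thesis unfolding fp_def e .
  qed
  have finD: "finite D" unfolding D_def by simp
  have cD: "card D = k - card S" unfolding D_def using S by (simp add: card_Diff_subset finite_subset)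
  obtain g where g: "bij_betw g D {0..<card D}" using ex_bij_betw_finite_nat[OF finD] by blast
  have "(\<Sum>\<sigma>\<in>{\<sigma>. \<sigma> permutes {0..<k} \<and> (\<forall>s\<in>S. \<sigma> s = s)}. f (fp k \<sigma>))
      = (\<Sum>\<sigma>\<in>{\<sigma>. \<sigma> permutes D}. (\<lambda>m. f (card S + m)) (card {z\<in>D. \<sigma> z = z}))"
    unfolding setq by (rule sum.cong) (auto simp: fpD)
  also have "\<dots> = (\<Sum>\<tau>\<in>{\<tau>. \<tau> permutes {0..<card D}}. (\<lambda>m. f (card S + m)) (card {z\<in>{0..<card D}. \<tau> z = z}))"
    by (rule sum_perm_bij[OF finD _ g]) simp
  finally show ?thesis unfolding cD fp_def by simp
qed



definition DL :: "nat \<Rightarrow> nat \<Rightarrow> nat list set" where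
  "DL k b = {xs. length xs = b \<and> distinct xs \<and> set xs \<subseteq> {0..<k}}"

lemma finite_DL: "finite (DL k b)"
proof -
  have "DL k b \<subseteq> {xs. set xs \<subseteq> {0..<k} \<and> length xs = b}" unfolding DL_def by auto
  moreover have "finite {xs. set xs \<subseteq> {0..<k} \<and> length xs = b}"
    by (rule finite_lists_length_eq) simp
  ultimately show ?thesis by (rule finite_subset)
qed

lemma W_char:
  assumes c: "c ` {0..<n} = {0..<b}" "setpart n c = P"
  defines "\<Xi> \<equiv> (\<lambda>xs. \<lambda>i\<in>{0..<n}. xs ! c i)"
  shows "{v \<in> words k n. setpart n v = P} = \<Xi> ` DL k b"
    and "inj_on \<Xi> (DL k b)"
    and "\<And>xs. xs \<in> DL k b \<Longrightarrow> \<Xi> xs ` {0..<n} = set xs"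
proof -
  have cb: "c i < b" if "i < n" for i using c(1) that by auto
  have cs: "\<exists>i<n. c i = p" if "p < b" for p using c(1) that
    by (metis atLeastLessThan_iff imageE zero_le)
  show img: "\<Xi> xs ` {0..<n} = set xs" if "xs \<in> DL k b" for xs
  proof -
    have "\<Xi> xs ` {0..<n} = (\<lambda>p. xs ! p) ` (c ` {0..<n})" unfolding \<Xi>_def by (auto simp: image_image)
    also have "\<dots> = set xs" using that unfolding c(1) DL_def by (auto simp: set_conv_nth)
    finally show ?thesis .
  qed
  show "inj_on \<Xi> (DL k b)"
  proof (rule inj_onI)
    fix xs ys assume xs: "xs \<in> DL k b" and ys: "ys \<in> DL k b" and eq: "\<Xi> xs = \<Xi> ys"
    have "xs ! p = ys ! p" if p: "p < b" for p
    proof -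
      obtain i where "i < n" "c i = p" using cs[OF p] by blast
      then show ?thesis using fun_cong[OF eq, of i] unfolding \<Xi>_def by auto
    qed
    then show "xs = ys" using xs ys unfolding DL_def by (auto intro: nth_equalityI)
  qed
  show "{v \<in> words k n. setpart n v = P} = \<Xi> ` DL k b"
  proof
    show "\<Xi> ` DL k b \<subseteq> {v \<in> words k n. setpart n v = P}"
    proof
      fix v assume "v \<in> \<Xi> ` DL k b"
      then obtain xs where xs: "xs \<in> DL k b" and v: "v = \<Xi> xs" by blast
      have len: "length xs = b" and dis: "distinct xs" and sk: "set xs \<subseteq> {0..<k}"
        using xs unfolding DL_def by auto
      have xk: "xs ! c i \<in> {0..<k}" if "i < n" for i
        using sk nth_mem[of "c i" xs] cb[OF that] len by blast
      have "v \<in> words k n" unfolding words_def v \<Xi>_def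
        using xk by (auto simp: PiE_iff)
      moreover have "setpart n v = setpart n c"
        unfolding setpart_eq_iff v \<Xi>_def using cb len dis by (simp add: nth_eq_iff_index_eq)
      ultimately show "v \<in> {v \<in> words k n. setpart n v = P}" using c(2) by simp
    qed
    show "{v \<in> words k n. setpart n v = P} \<subseteq> \<Xi> ` DL k b"
    proof
      fix v assume "v \<in> {v \<in> words k n. setpart n v = P}"
      then have vw: "v \<in> words k n" and vs: "setpart n v = setpart n c" using c(2) by auto
      have vc: "v i = v j \<longleftrightarrow> c i = c j" if "i < n" "j < n" for i j
        using vs that unfolding setpart_eq_iff by blast
      define r where "r p = (SOME i. i < n \<and> c i = p)" for p
      have r: "r p < n \<and> c (r p) = p" if "p < b" for p
        unfolding r_def using someI_ex[OF cs[OF that]] .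
      define xs where "xs = map (\<lambda>p. v (r p)) [0..<b]"
      have vk: "v i \<in> {0..<k}" if "i < n" for i using vw that unfolding words_def by auto
      have "xs \<in> DL k b"
        unfolding DL_def xs_def
      proof (intro CollectI conjI)
        show "distinct (map (\<lambda>p. v (r p)) [0..<b])"
          unfolding distinct_map
        proof
          show "inj_on (\<lambda>p. v (r p)) (set [0..<b])"
            by (rule inj_onI) (use r vc in \<open>auto\<close>)
        qed simp
        show "set (map (\<lambda>p. v (r p)) [0..<b]) \<subseteq> {0..<k}" using r vk by auto
      qed simp
      moreover have "\<Xi> xs = v"
      proof
        fix i show "\<Xi> xs i = v i"
        proof (cases "i < n")
          case True
          then have "xs ! c i = v (r (c i))" unfolding xs_def using cb by simp
          also have "\<dots> = v i" using vc r cb True by metis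
          finally show ?thesis unfolding \<Xi>_def using True by simp
        next
          case False
          then show ?thesis using vw unfolding words_def \<Xi>_def by (auto simp: PiE_def extensional_def)
        qed
      qed
      ultimately show "v \<in> \<Xi> ` DL k b" by blast
    qed
  qed
qed

lemma sum_W:
  assumes c: "c ` {0..<n} = {0..<b}" "setpart n c = P"
  shows "(\<Sum>v\<in>{v \<in> words k n. setpart n v = P}. F (v ` {0..<n})) = (\<Sum>xs\<in>DL k b. F (set xs))"
proof -
  note w = W_char[OF c, where k=k]
  have "(\<Sum>v\<in>(\<lambda>xs. \<lambda>i\<in>{0..<n}. xs ! c i) ` DL k b. F (v ` {0..<n}))
      = (\<Sum>xs\<in>DL k b. F ((\<lambda>i\<in>{0..<n}. xs ! c i) ` {0..<n}))"
    by (rule sum.reindex[OF w(2), unfolded comp_def])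
  also have "\<dots> = (\<Sum>xs\<in>DL k b. F (set xs))"
    by (rule sum.cong[OF refl]) (simp only: w(3))
  finally show ?thesis unfolding w(1) .
qed

lemma W_props:
  assumes c: "c ` {0..<n} = {0..<b}" "setpart n c = P"
    and v: "v \<in> words k n" "setpart n v = P"
  shows "card (v ` {0..<n}) = b" "v ` {0..<n} \<subseteq> {0..<k}"
proof -
  note w = W_char[OF c, where k=k]
  from v w(1) obtain xs where xs: "xs \<in> DL k b" "v = (\<lambda>i\<in>{0..<n}. xs ! c i)" by blast
  then have "v ` {0..<n} = set xs" using w(3) by simp
  then show "card (v ` {0..<n}) = b" "v ` {0..<n} \<subseteq> {0..<k}"
    using xs(1) unfolding DL_def by (auto simp: distinct_card)
qed

lemma sum_DL:
  fixes F :: "nat set \<Rightarrow> real"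
  shows "(\<Sum>xs\<in>DL k b. F (set xs)) = fact b * (\<Sum>V\<in>{V. V \<subseteq> {0..<k} \<and> card V = b}. F V)"
proof -
  define T where "T = {V. V \<subseteq> {0..<k} \<and> card V = b}"
  have finT: "finite T" unfolding T_def by simp
  have ST: "set ` DL k b \<subseteq> T" unfolding T_def DL_def by (auto simp: distinct_card)
  have "(\<Sum>xs\<in>DL k b. F (set xs)) = (\<Sum>V\<in>T. \<Sum>xs\<in>{xs. xs \<in> DL k b \<and> set xs = V}. F (set xs))"
    by (rule sum.group[OF finite_DL finT ST, symmetric])
  also have "\<dots> = (\<Sum>V\<in>T. fact b * F V)"
  proof (rule sum.cong[OF refl])
    fix V assume V: "V \<in> T"
    have fV: "finite V" using V unfolding T_def by (auto intro: finite_subset)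
    have "{xs. xs \<in> DL k b \<and> set xs = V} = permutations_of_set V"
      using V unfolding T_def DL_def permutations_of_set_def by (auto simp: distinct_card)
    then have "card {xs. xs \<in> DL k b \<and> set xs = V} = fact b" using fV V unfolding T_def by simp
    moreover have "(\<Sum>xs\<in>{xs. xs \<in> DL k b \<and> set xs = V}. F (set xs))
        = (\<Sum>xs\<in>{xs. xs \<in> DL k b \<and> set xs = V}. F V)" by (rule sum.cong) auto
    ultimately show "(\<Sum>xs\<in>{xs. xs \<in> DL k b \<and> set xs = V}. F (set xs)) = fact b * F V"
      by simp
  qed
  finally show ?thesis unfolding T_def by (simp add: sum_distrib_left)
qed

lemma card_fiber:
  assumes U: "U \<subseteq> {0..<k}" "card U = a" and i: "i \<le> b"
  shows "card {V. (V \<subseteq> {0..<k} \<and> card V = b) \<and> card (V \<inter> U) = i}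
       = (a choose i) * ((k - a) choose (b - i))"
proof -
  define L where "L = {V. (V \<subseteq> {0..<k} \<and> card V = b) \<and> card (V \<inter> U) = i}"
  define R where "R = {A. A \<subseteq> U \<and> card A = i} \<times> {B. B \<subseteq> {0..<k} - U \<and> card B = b - i}"
  have fU: "finite U" using U finite_subset by blast
  have "bij_betw (\<lambda>V. (V \<inter> U, V - U)) L R"
  proof (rule bij_betw_byWitness[where f' = "\<lambda>(A, B). A \<union> B"])
    show "\<forall>V\<in>L. (case (V \<inter> U, V - U) of (A, B) \<Rightarrow> A \<union> B) = V" by auto
    show "\<forall>p\<in>R. (\<lambda>V. (V \<inter> U, V - U)) (case p of (A, B) \<Rightarrow> A \<union> B) = p"
      unfolding R_def by auto
    show "(\<lambda>V. (V \<inter> U, V - U)) ` L \<subseteq> R"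
    proof
      fix p assume "p \<in> (\<lambda>V. (V \<inter> U, V - U)) ` L"
      then obtain V where V: "V \<in> L" "p = (V \<inter> U, V - U)" by blast
      have fV: "finite V" using V unfolding L_def by (auto intro: finite_subset)
      have "card V = card (V \<inter> U) + card (V - U)"
        using fV by (simp add: card_Int_Diff)
      then show "p \<in> R" using V unfolding L_def R_def by auto
    qed
    show "(\<lambda>(A, B). A \<union> B) ` R \<subseteq> L"
    proof
      fix V assume "V \<in> (\<lambda>(A, B). A \<union> B) ` R"
      then obtain A B where AB: "A \<subseteq> U" "card A = i" "B \<subseteq> {0..<k} - U" "card B = b - i" "V = A \<union> B"
        unfolding R_def by auto
      have fA: "finite A" using AB fU finite_subset by blast
      have fB: "finite B" using AB by (meson finite_Diff finite_atLeastLessThan finite_subset)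
      have "card V = b" using AB fA fB i by (subst AB(5), subst card_Un_disjoint) auto
      moreover have "V \<inter> U = A" using AB by auto
      ultimately show "V \<in> L" unfolding L_def using AB U by auto
    qed
  qed
  then have "card L = card R" by (rule bij_betw_same_card)
  also have "card ({0..<k} - U) = k - a" using U by (simp add: card_Diff_subset finite_subset)
  then have "card R = (a choose i) * ((k - a) choose (b - i))"
    unfolding R_def card_cartesian_product using n_subsets[OF fU] n_subsets[of "{0..<k} - U"] U
    by (simp add: card_Diff_subset)
  finally show ?thesis unfolding L_def .
qed

lemma sum_subsets:
  fixes H :: "nat \<Rightarrow> real"
  assumes U: "U \<subseteq> {0..<k}" "card U = a"
  shows "(\<Sum>V\<in>{V. V \<subseteq> {0..<k} \<and> card V = b}. H (card (V \<inter> U)))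
       = (\<Sum>i=0..b. real ((a choose i) * ((k - a) choose (b - i))) * H i)"
proof -
  define T where "T = {V. V \<subseteq> {0..<k} \<and> card V = b}"
  have finT: "finite T" unfolding T_def by simp
  have ST: "(\<lambda>V. card (V \<inter> U)) ` T \<subseteq> {0..b}"
  proof
    fix i assume "i \<in> (\<lambda>V. card (V \<inter> U)) ` T"
    then obtain V where "V \<in> T" "i = card (V \<inter> U)" by blast
    then show "i \<in> {0..b}" unfolding T_def
      by (auto intro!: card_mono simp: finite_subset)
  qed
  have "(\<Sum>V\<in>T. H (card (V \<inter> U))) = (\<Sum>i\<in>{0..b}. \<Sum>V\<in>{V. V \<in> T \<and> card (V \<inter> U) = i}. H (card (V \<inter> U)))"
    by (rule sum.group[OF finT _ ST, symmetric]) simp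
  also have "\<dots> = (\<Sum>i=0..b. real ((a choose i) * ((k - a) choose (b - i))) * H i)"
  proof (rule sum.cong[OF refl])
    fix i assume "i \<in> {0..b}"
    then have "card {V. V \<in> T \<and> card (V \<inter> U) = i} = (a choose i) * ((k - a) choose (b - i))"
      using card_fiber[OF U, of i b] unfolding T_def by simp
    moreover have "(\<Sum>V\<in>{V. V \<in> T \<and> card (V \<inter> U) = i}. H (card (V \<inter> U)))
       = (\<Sum>V\<in>{V. V \<in> T \<and> card (V \<inter> U) = i}. H i)" by (rule sum.cong) auto
    ultimately show "(\<Sum>V\<in>{V. V \<in> T \<and> card (V \<inter> U) = i}. H (card (V \<inter> U)))
       = real ((a choose i) * ((k - a) choose (b - i))) * H i" by simp
  qed
  finally show ?thesis unfolding T_def .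
qed



definition Sym :: "nat \<Rightarrow> nat \<Rightarrow> nat \<Rightarrow> nat \<Rightarrow> real" where
  "Sym k n a b = (\<Sum>i\<in>{i. i \<le> a \<and> i \<le> b \<and> a + b \<le> k + i}.
      fact a * fact b / (fact i * fact (a - i) * fact (b - i)) * EY k n (a + b - i))"

lemma Sym_comm: "Sym k n a b = Sym k n b a"
proof -
  have "{i. i \<le> a \<and> i \<le> b \<and> a + b \<le> k + i} = {i. i \<le> b \<and> i \<le> a \<and> b + a \<le> k + i}" by auto
  moreover have "(fact a * fact b / (fact i * fact (a - i) * fact (b - i)) * EY k n (a + b - i) :: real)
     = fact b * fact a / (fact i * fact (b - i) * fact (a - i)) * EY k n (b + a - i)" for i
    by (simp add: add.commute mult.commute mult.left_commute)
  ultimately show ?thesis unfolding Sym_def by simp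
qed

lemma fixset_card:
  assumes S: "S \<subseteq> {0..<k}"
  shows "card {\<sigma>. \<sigma> permutes {0..<k} \<and> (\<forall>s\<in>S. \<sigma> s = s)} = fact (k - card S)"
proof -
  have fS: "finite S" using S finite_subset by blast
  have fin: "finite {\<sigma>. \<sigma> permutes {0..<k} \<and> (\<forall>s\<in>S. \<sigma> s = s)}"
    by (rule finite_subset[of _ "{\<sigma>. \<sigma> permutes {0..<k}}"]) (auto simp: finite_permutations)
  have "real (card {\<sigma>. \<sigma> permutes {0..<k} \<and> (\<forall>s\<in>S. \<sigma> s = s)})
      = (\<Sum>\<sigma>\<in>{\<sigma>. \<sigma> permutes {0..<k} \<and> (\<forall>s\<in>S. \<sigma> s = s)}. (\<lambda>_. 1::real) (fp k \<sigma>))"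
    by simp
  also have "\<dots> = (\<Sum>\<tau>\<in>{\<tau>. \<tau> permutes {0..<k - card S}}. (\<lambda>_. 1::real) (card S + fp (k - card S) \<tau>))"
    by (rule fix_perm_sum[OF S])
  also have "\<dots> = real (card {\<tau>. \<tau> permutes {0..<k - card S}})" by simp
  also have "\<dots> = fact (k - card S)" by (simp add: card_permutations)
  finally have "real (card {\<sigma>. \<sigma> permutes {0..<k} \<and> (\<forall>s\<in>S. \<sigma> s = s)}) = real (fact (k - card S))"
    by simp
  then show ?thesis by (simp only: of_nat_eq_iff)
qed

lemma fixset_sum:
  assumes S: "S \<subseteq> {0..<k}"
  shows "(\<Sum>\<sigma>\<in>{\<sigma>. \<sigma> permutes {0..<k} \<and> (\<forall>s\<in>S. \<sigma> s = s)}. 1 / real (fp k \<sigma>) ^ n)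
       = fact (k - card S) * EY k n (card S)"
proof -
  have "(\<Sum>\<sigma>\<in>{\<sigma>. \<sigma> permutes {0..<k} \<and> (\<forall>s\<in>S. \<sigma> s = s)}. (\<lambda>m. 1 / real m ^ n) (fp k \<sigma>))
     = (\<Sum>\<tau>\<in>{\<tau>. \<tau> permutes {0..<k - card S}}. (\<lambda>m. 1 / real m ^ n) (card S + fp (k - card S) \<tau>))"
    by (rule fix_perm_sum[OF S])
  also have "\<dots> = (\<Sum>\<tau>\<in>{\<tau>. \<tau> permutes {0..<k - card S}}. 1 / (real (fp (k - card S) \<tau>) + real (card S)) ^ n)"
    by (simp add: add.commute)
  also have "\<dots> = fact (k - card S) * EY k n (card S)"
    unfolding EY_def by (simp add: card_permutations)
  finally show ?thesis by simp
qed



lemma Kbar_Sym: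
  assumes nk: "n \<le> k" and x: "x \<in> setparts n" and y: "y \<in> setparts n"
  shows "Kbar k n x y = Sym k n (card x) (card y)"
proof -
  define a where "a = card x"
  define b where "b = card y"
  obtain cx where cx: "cx ` {0..<n} = {0..<a}" "setpart n cx = x"
    using part_class[of n x] x unfolding setparts_def a_def by auto
  obtain cy where cy: "cy ` {0..<n} = {0..<b}" "setpart n cy = y"
    using part_class[of n y] y unfolding setparts_def b_def by auto
  have an: "a \<le> n" using card_image_le[of "{0..<n}" cx] cx(1) by simp
  have ak: "a \<le> k" using an nk by simp
  define u0 where "u0 = (\<lambda>i\<in>{0..<n}. cx i)"
  have "cx i < k" if "i < n" for i
  proof -
    have "cx i \<in> cx ` {0..<n}" using that by simp
    then have "cx i \<in> {0..<a}" unfolding cx(1) .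
    then show ?thesis using ak by simp
  qed
  then have "u0 \<in> words k n" unfolding words_def u0_def by (auto simp: PiE_iff)
  moreover have "setpart n u0 = x" unfolding cx(2)[symmetric] setpart_eq_iff u0_def by simp
  ultimately have ex: "\<exists>u. u \<in> words k n \<and> setpart n u = x" by blast
  define u where "u = (SOME u. u \<in> words k n \<and> setpart n u = x)"
  have u: "u \<in> words k n" "setpart n u = x" using someI_ex[OF ex] unfolding u_def by auto
  define U where "U = u ` {0..<n}"
  have U: "card U = a" "U \<subseteq> {0..<k}" using W_props[OF cx u] unfolding U_def by auto
  define Q where "Q j = fact (k - j) * EY k n j / fact (k - a)" for j
  have stab_eq: "stab k n w = {\<sigma>. \<sigma> permutes {0..<k} \<and> (\<forall>s\<in>w ` {0..<n}. \<sigma> s = s)}" for w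
    unfolding stab_def by auto
  have Kb_eq: "Kb k n u v = Q (card (U \<union> v ` {0..<n}))"
    if v: "v \<in> words k n" "setpart n v = y" for v
  proof -
    have V: "v ` {0..<n} \<subseteq> {0..<k}" using W_props[OF cy v] by simp
    have S: "U \<union> v ` {0..<n} \<subseteq> {0..<k}" using U V by auto
    have int: "stab k n u \<inter> stab k n v = {\<sigma>. \<sigma> permutes {0..<k} \<and> (\<forall>s\<in>U \<union> v ` {0..<n}. \<sigma> s = s)}"
      unfolding stab_eq U_def by auto
    have cs: "card (stab k n u) = fact (k - a)"
      unfolding stab_eq using fixset_card[OF U(2)] U(1) unfolding U_def by simp
    have "Kb k n u v = (\<Sum>\<sigma>\<in>stab k n u \<inter> stab k n v. (1 / real (fp k \<sigma>) ^ n) / fact (k - a))"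
      unfolding Kb_def cs by (rule sum.cong) (auto simp: field_simps)
    also have "\<dots> = (\<Sum>\<sigma>\<in>stab k n u \<inter> stab k n v. 1 / real (fp k \<sigma>) ^ n) / fact (k - a)"
      by (simp add: sum_divide_distrib)
    also have "\<dots> = Q (card (U \<union> v ` {0..<n}))"
      unfolding int fixset_sum[OF S] Q_def by simp
    finally show ?thesis .
  qed
  have "Kbar k n x y = (\<Sum>v\<in>{v \<in> words k n. setpart n v = y}. Kb k n u v)"
    unfolding Kbar_def Let_def u_def by simp
  also have "\<dots> = (\<Sum>v\<in>{v \<in> words k n. setpart n v = y}. (\<lambda>V. Q (card (U \<union> V))) (v ` {0..<n}))"
    by (rule sum.cong) (auto simp: Kb_eq)
  also have "\<dots> = (\<Sum>xs\<in>DL k b. (\<lambda>V. Q (card (U \<union> V))) (set xs))"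
    by (rule sum_W[OF cy])
  also have "\<dots> = fact b * (\<Sum>V\<in>{V. V \<subseteq> {0..<k} \<and> card V = b}. Q (card (U \<union> V)))"
    by (rule sum_DL)
  also have "(\<Sum>V\<in>{V. V \<subseteq> {0..<k} \<and> card V = b}. Q (card (U \<union> V)))
      = (\<Sum>V\<in>{V. V \<subseteq> {0..<k} \<and> card V = b}. (\<lambda>i. Q (a + b - i)) (card (V \<inter> U)))"
  proof (rule sum.cong[OF refl])
    fix V assume V: "V \<in> {V. V \<subseteq> {0..<k} \<and> card V = b}"
    have fV: "finite V" using V finite_subset by auto
    have fU: "finite U" using U finite_subset by auto
    have "card U + card V = card (U \<union> V) + card (U \<inter> V)" by (rule card_Un_Int[OF fU fV])
    then have "card (U \<union> V) = a + b - card (V \<inter> U)" using V U by (simp add: Int_commute)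
    then show "Q (card (U \<union> V)) = (\<lambda>i. Q (a + b - i)) (card (V \<inter> U))" by simp
  qed
  also have "\<dots> = (\<Sum>i=0..b. real ((a choose i) * ((k - a) choose (b - i))) * Q (a + b - i))"
    by (rule sum_subsets[OF U(2,1)])
  finally have K1: "Kbar k n x y = fact b * (\<Sum>i=0..b. real ((a choose i) * ((k - a) choose (b - i))) * Q (a + b - i))" .
  define I where "I = {i. i \<le> a \<and> i \<le> b \<and> a + b \<le> k + i}"
  have "fact b * (\<Sum>i=0..b. real ((a choose i) * ((k - a) choose (b - i))) * Q (a + b - i))
      = (\<Sum>i=0..b. fact b * (real ((a choose i) * ((k - a) choose (b - i))) * Q (a + b - i)))"
    by (simp add: sum_distrib_left)
  also have "\<dots> = (\<Sum>i\<in>I. fact a * fact b / (fact i * fact (a - i) * fact (b - i)) * EY k n (a + b - i))"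
  proof (rule sum.mono_neutral_cong_right)
    show "finite {0..b}" by simp
    show "I \<subseteq> {0..b}" unfolding I_def by auto
    show "\<forall>i\<in>{0..b} - I. fact b * (real ((a choose i) * ((k - a) choose (b - i))) * Q (a + b - i)) = 0"
    proof
      fix i assume that: "i \<in> {0..b} - I"
      have "i > a \<or> b - i > k - a" using that ak unfolding I_def by auto
      then have "(a choose i) * ((k - a) choose (b - i)) = 0" by auto
      then show "fact b * (real ((a choose i) * ((k - a) choose (b - i))) * Q (a + b - i)) = 0" by simp
    qed
    show "fact b * (real ((a choose i) * ((k - a) choose (b - i))) * Q (a + b - i))
        = fact a * fact b / (fact i * fact (a - i) * fact (b - i)) * EY k n (a + b - i)"
      if "i \<in> I" for i
    proof -
      have i: "i \<le> a" "i \<le> b" "a + b \<le> k + i" using that unfolding I_def by auto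
      have c1: "real (a choose i) = fact a / (fact i * fact (a - i))" by (rule binomial_fact[OF i(1)])
      have c2: "real ((k - a) choose (b - i)) = fact (k - a) / (fact (b - i) * fact (k - a - (b - i)))"
        by (rule binomial_fact) (use i in auto)
      have kk: "k - (a + b - i) = k - a - (b - i)" using i ak by auto
      have nz: "(fact m :: real) \<noteq> 0" for m by simp
      have alg: "\<And>fb fa fi fai fka fbi fr E :: real. fi \<noteq> 0 \<Longrightarrow> fai \<noteq> 0 \<Longrightarrow> fka \<noteq> 0 \<Longrightarrow> fbi \<noteq> 0 \<Longrightarrow> fr \<noteq> 0 \<Longrightarrow>
          fb * (fa / (fi * fai) * (fka / (fbi * fr)) * (fr * E / fka)) = fa * fb / (fi * fai * fbi) * E"
        by (simp add: field_simps)
      show ?thesis unfolding of_nat_mult c1 c2 Q_def kk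
        by (rule alg) (rule nz)+
    qed
  qed
  finally show ?thesis using K1 unfolding Sym_def I_def a_def b_def by simp
qed

lemma Sym_reindex:
  assumes ab: "a \<le> b"
  shows "Sym k n a b = (\<Sum>j = b..min (a + b) k.
                 fact a * fact b / (fact (j - a) * fact (j - b) * fact (a + b - j)) * EY k n j)"
  unfolding Sym_def
proof (rule sum.reindex_bij_witness[where j = "\<lambda>i. a + b - i" and i = "\<lambda>j. a + b - j"])
  fix i assume i: "i \<in> {i. i \<le> a \<and> i \<le> b \<and> a + b \<le> k + i}"
  show "a + b - (a + b - i) = i" using i by auto
  show "a + b - i \<in> {b..min (a + b) k}" using i by auto
  have e1: "a + b - i - a = b - i" "a + b - i - b = a - i" "a + b - (a + b - i) = i" using i by auto
  show "fact a * fact b / (fact (a + b - i - a) * fact (a + b - i - b) * fact (a + b - (a + b - i))) * EY k n (a + b - i)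
      = fact a * fact b / (fact i * fact (a - i) * fact (b - i)) * EY k n (a + b - i)"
    unfolding e1 by (simp add: mult_ac)
next
  fix j assume j: "j \<in> {b..min (a + b) k}"
  show "a + b - (a + b - j) = j" using j by auto
  show "a + b - j \<in> {i. i \<le> a \<and> i \<le> b \<and> a + b \<le> k + i}" using j ab by auto
qed


theorem proposition3p1:
  fixes k n :: nat and x y :: "nat set set"
  assumes "1 \<le> n" and "n \<le> k"
    and "x \<in> setparts n" and "y \<in> setparts n"
  shows "(card x \<le> card y \<longrightarrow>
            Kbar k n x y =
              (\<Sum>j = card y..min (card x + card y) k.
                 fact (card x) * fact (card y) /
                 (fact (j - card x) * fact (j - card y) * fact (card x + card y - j))
                 * EY k n j))
       \<and> (card x > card y \<longrightarrow> Kbar k n x y = Kbar k n y x)"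
proof -
  have K: "Kbar k n x y = Sym k n (card x) (card y)" by (rule Kbar_Sym[OF assms(2,3,4)])
  have K': "Kbar k n y x = Sym k n (card y) (card x)" by (rule Kbar_Sym[OF assms(2,4,3)])
  show ?thesis
  proof (intro conjI impI)
    assume "card x \<le> card y"
    then show "Kbar k n x y =
              (\<Sum>j = card y..min (card x + card y) k.
                 fact (card x) * fact (card y) /
                 (fact (j - card x) * fact (j - card y) * fact (card x + card y - j))
                 * EY k n j)" unfolding K by (rule Sym_reindex)
  next
    show "Kbar k n x y = Kbar k n y x" unfolding K K' by (rule Sym_comm)
  qed
qed

end
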